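(* Let $n\ge 4$ and let $R(F_n^1)$ be the complex Leibniz algebra with basis $\{h_1,h_2,e_1,\dots,e_n\}$ and nonzero products $[e_i,e_1]=e_{i+1}$ ($2\le i\le n-1$), $[e_1,h_2]=e_1$, $[h_2,e_1]=-e_1$, $[e_i,h_1]=e_i$ ($2\le i\le n$), $[e_i,h_2]=(i-1)e_i$ ($2\le i\le n$). A linear map $D$ on $R(F_n^1)$ is an anti-derivation iff there exist $\beta_1,\dots,\beta_{n+1},\gamma_1,\gamma_2\in\mathbb C$ with $$D(h_1)=\gamma_1h_1+\sum_{i=2}^n\beta_{i+1}e_i,\quad D(h_2)=\gamma_2h_1+\beta_2e_1+\sum_{i=2}^n(i-1)\beta_{i+1}e_i,$$ $$D(e_1)=\beta_1e_1+\sum_{i=3}^n\beta_ie_i,\quad D(e_i)=0\ (2\le i\le n).$$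
   Context: Leibniz algebras are right Leibniz over $\mathbb C$: $[x,[y,z]]=[[x,y],z]-[[x,z],y]$. Unlisted products are zero. An anti-derivation is a linear map $D$ with $D([x,y])=[D(x),y]-[D(y),x]$ for all $x,y$. *)

theory Defs
  imports Complex_Main "HOL-Library.Function_Algebras"
begin

datatype bidx = H1 | H2 | E nat

definition Bset :: "nat \<Rightarrow> bidx set" where
  "Bset n = {H1, H2} \<union> E ` {1..n}"

definition Vsp :: "nat \<Rightarrow> (bidx \<Rightarrow> complex) set" where
  "Vsp n = {v. \<forall>b. b \<notin> Bset n \<longrightarrow> v b = 0}"

definition bv :: "bidx \<Rightarrow> bidx \<Rightarrow> complex" where
  "bv b = (\<lambda>c. if c = b then 1 else 0)"

definition scal :: "complex \<Rightarrow> (bidx \<Rightarrow> complex) \<Rightarrow> bidx \<Rightarrow> complex" where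
  "scal a v = (\<lambda>c. a * v c)"

text \<open>Structure constants: sc n a b c is the coefficient of c in [a,b].\<close>
definition sc :: "nat \<Rightarrow> bidx \<Rightarrow> bidx \<Rightarrow> bidx \<Rightarrow> complex" where
  "sc n a b c =
    (case a of
       E i \<Rightarrow> (case b of
                 E j \<Rightarrow> (if j = 1 \<and> 2 \<le> i \<and> i + 1 \<le> n \<and> c = E (i + 1) then 1 else 0)
               | H1 \<Rightarrow> (if 2 \<le> i \<and> i \<le> n \<and> c = E i then 1 else 0)
               | H2 \<Rightarrow> (if i = 1 \<and> c = E 1 then 1
                        else if 2 \<le> i \<and> i \<le> n \<and> c = E i then of_nat (i - 1) else 0))
     | H2 \<Rightarrow> (case b of
                 E j \<Rightarrow> (if j = 1 \<and> c = E 1 then -1 else 0)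
               | _ \<Rightarrow> 0)
     | H1 \<Rightarrow> 0)"

definition bracket :: "nat \<Rightarrow> (bidx \<Rightarrow> complex) \<Rightarrow> (bidx \<Rightarrow> complex) \<Rightarrow> bidx \<Rightarrow> complex" where
  "bracket n x y = (\<lambda>c. \<Sum>a\<in>Bset n. \<Sum>b\<in>Bset n. x a * y b * sc n a b c)"

definition linear_on :: "nat \<Rightarrow> ((bidx \<Rightarrow> complex) \<Rightarrow> (bidx \<Rightarrow> complex)) \<Rightarrow> bool" where
  "linear_on n D \<longleftrightarrow>
     (\<forall>x\<in>Vsp n. D x \<in> Vsp n) \<and>
     (\<forall>x\<in>Vsp n. \<forall>y\<in>Vsp n. D (x + y) = D x + D y) \<and>
     (\<forall>x\<in>Vsp n. \<forall>a. D (scal a x) = scal a (D x))"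

definition anti_derivation :: "nat \<Rightarrow> ((bidx \<Rightarrow> complex) \<Rightarrow> (bidx \<Rightarrow> complex)) \<Rightarrow> bool" where
  "anti_derivation n D \<longleftrightarrow>
     (\<forall>x\<in>Vsp n. \<forall>y\<in>Vsp n. D (bracket n x y) = bracket n (D x) y - bracket n (D y) x)"

end

theory Submission
  imports Defs
begin

lemma sum_fun_app: "(sum f A) x = (\<Sum>a\<in>A. f a x)"
  by (induction A rule: infinite_finite_induct) auto

lemma finB[simp]: "finite (Bset n)" by (simp add: Bset_def)

lemma sumB: "(\<Sum>x\<in>Bset n. f x) = f H1 + f H2 + (\<Sum>i=1..n. f (E i))"
proof -
  have B: "Bset n = insert H1 (insert H2 (E ` {1..n}))" by (auto simp: Bset_def)
  have "inj_on E {1..n}" by (simp add: inj_on_def)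
  then have "sum f (E ` {1..n}) = (\<Sum>i=1..n. f (E i))" by (simp add: sum.reindex)
  moreover have "sum f (insert H1 (insert H2 (E ` {1..n}))) = f H1 + (f H2 + sum f (E ` {1..n}))"
    by (simp add: image_iff)
  ultimately show ?thesis unfolding B by (simp add: add.assoc)
qed

lemma sum_one: "finite A \<Longrightarrow> j \<in> A \<Longrightarrow> (\<And>i. i \<in> A \<Longrightarrow> i \<noteq> j \<Longrightarrow> f i = 0) \<Longrightarrow> sum f A = f j"
  by (simp add: sum.remove)

lemma sc_simps[simp]:
  "sc n H1 b c = 0"
  "sc n H2 H1 c = 0" "sc n H2 H2 c = 0"
  "sc n H2 (E j) c = (if j = 1 \<and> c = E 1 then -1 else 0)"
  "sc n (E i) (E j) c = (if j = 1 \<and> 2 \<le> i \<and> i + 1 \<le> n \<and> c = E (i + 1) then 1 else 0)"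
  "sc n (E i) H1 c = (if 2 \<le> i \<and> i \<le> n \<and> c = E i then 1 else 0)"
  "sc n (E i) H2 c = (if i = 1 \<and> c = E 1 then 1
                        else if 2 \<le> i \<and> i \<le> n \<and> c = E i then of_nat (i - 1) else 0)"
  by (simp_all add: sc_def)

definition Rv :: "nat \<Rightarrow> bidx \<Rightarrow> (bidx \<Rightarrow> complex) \<Rightarrow> bidx \<Rightarrow> complex" where
  "Rv n b v c = (\<Sum>a\<in>Bset n. v a * sc n a b c)"

lemma Rv_H1: "Rv n H1 v c = (case c of E i \<Rightarrow> if 2 \<le> i \<and> i \<le> n then v (E i) else 0 | _ \<Rightarrow> 0)"
proof (cases c)
  case (E j)
  show ?thesis
  proof (cases "2 \<le> j \<and> j \<le> n")
    case True
    then show ?thesis unfolding Rv_def sumB E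
      by (subst sum_one[where j=j]) auto
  qed (auto simp: Rv_def sumB E intro!: sum.neutral)
qed (auto simp: Rv_def sumB)

lemma Rv_H2: assumes n: "1 \<le> n" shows "Rv n H2 v c = (case c of E i \<Rightarrow> if i = 1 then v (E 1) else if 2 \<le> i \<and> i \<le> n then of_nat (i - 1) * v (E i) else 0 | _ \<Rightarrow> 0)"
proof (cases c)
  case (E j)
  show ?thesis
  proof (cases "1 \<le> j \<and> j \<le> n")
    case True
    then show ?thesis unfolding Rv_def sumB E
      by (subst sum_one[where j=j]) auto
  qed (use n in \<open>auto simp: Rv_def sumB E intro!: sum.neutral\<close>)
qed (auto simp: Rv_def sumB)

lemma Rv_E1: assumes n: "1 \<le> n" shows "Rv n (E 1) v c = (case c of E i \<Rightarrow> if i = 1 then - v H2 else if 3 \<le> i \<and> i \<le> n then v (E (i - 1)) else 0 | _ \<Rightarrow> 0)"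
proof (cases c)
  case (E j)
  show ?thesis
  proof (cases "3 \<le> j \<and> j \<le> n")
    case True
    then show ?thesis unfolding Rv_def sumB E
      by (subst sum_one[where j="j-1"]) auto
  qed (use n in \<open>auto simp: Rv_def sumB E intro!: sum.neutral\<close>)
qed (auto simp: Rv_def sumB)

lemma Rv_Ej: "j \<noteq> 1 \<Longrightarrow> Rv n (E j) v c = 0"
  by (auto simp: Rv_def sumB intro!: sum.neutral)

definition Ls :: "nat \<Rightarrow> bidx \<Rightarrow> bidx \<Rightarrow> (bidx \<Rightarrow> complex) \<Rightarrow> complex" where
  "Ls n a b f = (\<Sum>k\<in>Bset n. sc n a b k * f k)"

lemma Ls_H1: "Ls n H1 b f = 0"
  by (simp add: Ls_def)
lemma Ls_H2H1: "Ls n H2 H1 f = 0" by (simp add: Ls_def)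
lemma Ls_H2H2: "Ls n H2 H2 f = 0" by (simp add: Ls_def)
lemma Ls_H2E: assumes n: "1 \<le> n" shows "Ls n H2 (E j) f = (if j = 1 then - f (E 1) else 0)"
proof (cases "j = 1")
  case True
  then show ?thesis unfolding Ls_def sumB using n
    by (subst sum_one[where j=1]) auto
qed (auto simp: Ls_def)
lemma Ls_EE: "Ls n (E i) (E j) f = (if j = 1 \<and> 2 \<le> i \<and> i + 1 \<le> n then f (E (i+1)) else 0)"
proof (cases "j = 1 \<and> 2 \<le> i \<and> i + 1 \<le> n")
  case True
  then show ?thesis unfolding Ls_def sumB
    by (subst sum_one[where j="i+1"]) auto
qed (auto simp: Ls_def sumB intro!: sum.neutral)
lemma Ls_EH1: "Ls n (E i) H1 f = (if 2 \<le> i \<and> i \<le> n then f (E i) else 0)"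
proof (cases "2 \<le> i \<and> i \<le> n")
  case True
  then show ?thesis unfolding Ls_def sumB
    by (subst sum_one[where j="i"]) auto
qed (auto simp: Ls_def sumB intro!: sum.neutral)
lemma Ls_EH2: assumes n: "1 \<le> n" shows "Ls n (E i) H2 f = (if i = 1 then f (E 1)
                        else if 2 \<le> i \<and> i \<le> n then of_nat (i - 1) * f (E i) else 0)"
proof (cases "1 \<le> i \<and> i \<le> n")
  case True
  then show ?thesis unfolding Ls_def sumB
    by (subst sum_one[where j="i"]) auto
qed (use n in \<open>auto simp: Ls_def sumB intro!: sum.neutral\<close>)


lemma bv_Vsp: "k \<in> Bset n \<Longrightarrow> bv k \<in> Vsp n"
  by (auto simp: Vsp_def bv_def)

lemma scal_Vsp: "v \<in> Vsp n \<Longrightarrow> scal a v \<in> Vsp n"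
  by (auto simp: Vsp_def scal_def)

lemma add_Vsp: "v \<in> Vsp n \<Longrightarrow> w \<in> Vsp n \<Longrightarrow> v + w \<in> Vsp n"
  by (auto simp: Vsp_def)

lemma zero_Vsp: "0 \<in> Vsp n"
  by (auto simp: Vsp_def)

lemma scal0: "scal 0 v = 0" by (simp add: scal_def zero_fun_def)

lemma D0: assumes "linear_on n D" shows "D 0 = 0"
proof -
  have "D (scal 0 0) = scal 0 (D 0)" using assms zero_Vsp unfolding linear_on_def by blast
  then show ?thesis by (simp add: scal0)
qed

lemma lin_sum:
  assumes L: "linear_on n D" and fin: "finite S"
  shows "(\<forall>k\<in>S. f k \<in> Vsp n) \<longrightarrow> D (\<Sum>k\<in>S. f k) = (\<Sum>k\<in>S. D (f k)) \<and> (\<Sum>k\<in>S. f k) \<in> Vsp n"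
  using fin
proof (induction S rule: finite_induct)
  case empty
  show ?case using D0[OF L] zero_Vsp[of n] by (simp only: sum.empty) simp
next
  case (insert x F)
  have e1: "sum f (insert x F) = f x + sum f F" by (rule sum.insert[OF insert(1,2)])
  have e2: "(\<Sum>k\<in>insert x F. D (f k)) = D (f x) + (\<Sum>k\<in>F. D (f k))" by (rule sum.insert[OF insert(1,2)])
  show ?case
  proof
    assume A: "\<forall>k\<in>insert x F. f k \<in> Vsp n"
    then have "D (sum f F) = (\<Sum>k\<in>F. D (f k))" "sum f F \<in> Vsp n" "f x \<in> Vsp n" using insert(3) by auto
    then show "D (sum f (insert x F)) = (\<Sum>k\<in>insert x F. D (f k)) \<and> sum f (insert x F) \<in> Vsp n"
      unfolding e1 e2 using L add_Vsp unfolding linear_on_def by metis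
  qed
qed

lemma sum_bv: "a \<in> Bset n \<Longrightarrow> (\<Sum>a'\<in>Bset n. bv a a' * g a') = g a"
  by (subst sum_one[where j=a]) (auto simp: bv_def)

lemma expand: "x \<in> Vsp n \<Longrightarrow> x = (\<Sum>k\<in>Bset n. scal (x k) (bv k))"
  by (auto simp: fun_eq_iff sum_fun_app scal_def bv_def Vsp_def if_distrib cong: if_cong)

lemma D_expand:
  assumes L: "linear_on n D" and x: "x \<in> Vsp n"
  shows "D x c = (\<Sum>k\<in>Bset n. x k * D (bv k) c)"
proof -
  have "D x = D (\<Sum>k\<in>Bset n. scal (x k) (bv k))" using expand[OF x] by simp
  also have "\<dots> = (\<Sum>k\<in>Bset n. D (scal (x k) (bv k)))"
    using lin_sum[OF L finB, where f="\<lambda>k. scal (x k) (bv k)"] bv_Vsp scal_Vsp by blast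
  also have "\<dots> = (\<Sum>k\<in>Bset n. scal (x k) (D (bv k)))"
    using L bv_Vsp unfolding linear_on_def by (intro sum.cong) auto
  finally show ?thesis by (simp add: sum_fun_app scal_def)
qed

lemma sc_nz: "1 \<le> n \<Longrightarrow> c \<notin> Bset n \<Longrightarrow> sc n a b c = 0"
  by (cases a; cases b; cases c) (auto simp: Bset_def)

lemma bracket_Vsp: "1 \<le> n \<Longrightarrow> bracket n x y \<in> Vsp n"
  by (auto simp: Vsp_def bracket_def sc_nz)

lemma bracket_bv: assumes "a \<in> Bset n" "b \<in> Bset n" shows "bracket n (bv a) (bv b) = (\<lambda>c. sc n a b c)"
proof
  fix c
  have "bracket n (bv a) (bv b) c = (\<Sum>a'\<in>Bset n. bv a a' * (\<Sum>b'\<in>Bset n. bv b b' * sc n a' b' c))"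
    by (simp add: bracket_def sum_distrib_left mult.assoc)
  also have "\<dots> = sc n a b c" using assms by (simp add: sum_bv)
  finally show "bracket n (bv a) (bv b) c = sc n a b c" .
qed

lemma bracket_rbv: assumes "b \<in> Bset n" shows "bracket n v (bv b) c = Rv n b v c"
proof -
  have "bracket n v (bv b) c = (\<Sum>a\<in>Bset n. v a * (\<Sum>b'\<in>Bset n. bv b b' * sc n a b' c))"
    by (simp add: bracket_def sum_distrib_left mult.assoc mult.left_commute)
  also have "\<dots> = Rv n b v c" using assms by (simp add: sum_bv Rv_def)
  finally show ?thesis .
qed


lemma S2:
  assumes L: "linear_on n D" and x: "x \<in> Vsp n"
  shows "bracket n (D x) y c = (\<Sum>a\<in>Bset n. \<Sum>b\<in>Bset n. x a * y b * Rv n b (D (bv a)) c)"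
proof -
  have "bracket n (D x) y c = (\<Sum>a'\<in>Bset n. \<Sum>b\<in>Bset n. (\<Sum>a\<in>Bset n. x a * D (bv a) a') * y b * sc n a' b c)"
    by (simp add: bracket_def D_expand[OF L x])
  also have "\<dots> = (\<Sum>a'\<in>Bset n. \<Sum>b\<in>Bset n. \<Sum>a\<in>Bset n. x a * y b * (D (bv a) a' * sc n a' b c))"
    by (simp add: sum_distrib_left sum_distrib_right ac_simps)
  also have "\<dots> = (\<Sum>a'\<in>Bset n. \<Sum>a\<in>Bset n. \<Sum>b\<in>Bset n. x a * y b * (D (bv a) a' * sc n a' b c))"
    by (rule sum.cong[OF refl], rule sum.swap)
  also have "\<dots> = (\<Sum>a\<in>Bset n. \<Sum>a'\<in>Bset n. \<Sum>b\<in>Bset n. x a * y b * (D (bv a) a' * sc n a' b c))"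
    by (rule sum.swap)
  also have "\<dots> = (\<Sum>a\<in>Bset n. \<Sum>b\<in>Bset n. \<Sum>a'\<in>Bset n. x a * y b * (D (bv a) a' * sc n a' b c))"
    by (rule sum.cong[OF refl], rule sum.swap)
  also have "\<dots> = (\<Sum>a\<in>Bset n. \<Sum>b\<in>Bset n. x a * y b * Rv n b (D (bv a)) c)"
    by (simp add: Rv_def sum_distrib_left)
  finally show ?thesis .
qed

lemma S1:
  assumes L: "linear_on n D" and n: "1 \<le> n"
  shows "D (bracket n x y) c = (\<Sum>a\<in>Bset n. \<Sum>b\<in>Bset n. x a * y b * Ls n a b (\<lambda>k. D (bv k) c))"
proof -
  have "D (bracket n x y) c = (\<Sum>k\<in>Bset n. (\<Sum>a\<in>Bset n. \<Sum>b\<in>Bset n. x a * y b * sc n a b k) * D (bv k) c)"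
    by (subst D_expand[OF L bracket_Vsp[OF n]]) (simp add: bracket_def)
  also have "\<dots> = (\<Sum>k\<in>Bset n. \<Sum>a\<in>Bset n. \<Sum>b\<in>Bset n. x a * y b * (sc n a b k * D (bv k) c))"
    by (simp add: sum_distrib_left sum_distrib_right ac_simps)
  also have "\<dots> = (\<Sum>a\<in>Bset n. \<Sum>k\<in>Bset n. \<Sum>b\<in>Bset n. x a * y b * (sc n a b k * D (bv k) c))"
    by (rule sum.swap)
  also have "\<dots> = (\<Sum>a\<in>Bset n. \<Sum>b\<in>Bset n. \<Sum>k\<in>Bset n. x a * y b * (sc n a b k * D (bv k) c))"
    by (rule sum.cong[OF refl], rule sum.swap)
  also have "\<dots> = (\<Sum>a\<in>Bset n. \<Sum>b\<in>Bset n. x a * y b * Ls n a b (\<lambda>k. D (bv k) c))"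
    by (simp add: Ls_def sum_distrib_left)
  finally show ?thesis .
qed

lemma anti_iff:
  assumes L: "linear_on n D" and n: "1 \<le> n"
  shows "anti_derivation n D \<longleftrightarrow> (\<forall>a\<in>Bset n. \<forall>b\<in>Bset n. \<forall>c.
     Ls n a b (\<lambda>k. D (bv k) c) = Rv n b (D (bv a)) c - Rv n a (D (bv b)) c)"
proof
  assume A: "anti_derivation n D"
  show "\<forall>a\<in>Bset n. \<forall>b\<in>Bset n. \<forall>c. Ls n a b (\<lambda>k. D (bv k) c) = Rv n b (D (bv a)) c - Rv n a (D (bv b)) c"
  proof (intro ballI allI)
    fix a b c assume a: "a \<in> Bset n" and b: "b \<in> Bset n"
    have "D (bracket n (bv a) (bv b)) c = bracket n (D (bv a)) (bv b) c - bracket n (D (bv b)) (bv a) c"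
      using A bv_Vsp[OF a] bv_Vsp[OF b] unfolding anti_derivation_def by simp
    moreover have "D (bracket n (bv a) (bv b)) c = Ls n a b (\<lambda>k. D (bv k) c)"
      using D_expand[OF L bracket_Vsp[OF n], of "bv a" "bv b" c] a b by (simp add: bracket_bv Ls_def)
    ultimately show "Ls n a b (\<lambda>k. D (bv k) c) = Rv n b (D (bv a)) c - Rv n a (D (bv b)) c"
      using a b by (simp add: bracket_rbv)
  qed
next
  assume B: "\<forall>a\<in>Bset n. \<forall>b\<in>Bset n. \<forall>c. Ls n a b (\<lambda>k. D (bv k) c) = Rv n b (D (bv a)) c - Rv n a (D (bv b)) c"
  show "anti_derivation n D" unfolding anti_derivation_def
  proof (intro ballI ext)
    fix x y c assume x: "x \<in> Vsp n" and y: "y \<in> Vsp n"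
    have "D (bracket n x y) c = (\<Sum>a\<in>Bset n. \<Sum>b\<in>Bset n. x a * y b * (Rv n b (D (bv a)) c - Rv n a (D (bv b)) c))"
      unfolding S1[OF L n] using B by (intro sum.cong refl) auto
    also have "\<dots> = (\<Sum>a\<in>Bset n. \<Sum>b\<in>Bset n. x a * y b * Rv n b (D (bv a)) c)
                  - (\<Sum>a\<in>Bset n. \<Sum>b\<in>Bset n. x a * y b * Rv n a (D (bv b)) c)"
      by (simp add: right_diff_distrib sum_subtractf)
    also have "(\<Sum>a\<in>Bset n. \<Sum>b\<in>Bset n. x a * y b * Rv n a (D (bv b)) c)
             = (\<Sum>b\<in>Bset n. \<Sum>a\<in>Bset n. y b * x a * Rv n a (D (bv b)) c)"
      by (subst sum.swap) (simp add: ac_simps)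
    finally show "D (bracket n x y) c = (bracket n (D x) y - bracket n (D y) x) c"
      by (simp add: S2[OF L x] S2[OF L y])
  qed
qed


lemma sum_bvE: "finite A \<Longrightarrow> (\<Sum>i\<in>A. scal (f i) (bv (E i))) c = (case c of E j \<Rightarrow> if j \<in> A then f j else 0 | _ \<Rightarrow> 0)"
  by (cases c) (auto simp: sum_fun_app scal_def bv_def if_distrib cong: if_cong)

lemma scal_bv: "scal g (bv b) c = (if c = b then g else 0)"
  by (simp add: scal_def bv_def)

lemma bwd:
  assumes n: "4 \<le> n"
    and h1: "D (bv H1) = scal \<gamma>1 (bv H1) + (\<Sum>i=2..n. scal (\<beta> (i + 1)) (bv (E i)))"
    and h2: "D (bv H2) = scal \<gamma>2 (bv H1) + scal (\<beta> 2) (bv (E 1))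
                   + (\<Sum>i=2..n. scal (of_nat (i - 1) * \<beta> (i + 1)) (bv (E i)))"
    and e1: "D (bv (E 1)) = scal (\<beta> 1) (bv (E 1)) + (\<Sum>i=3..n. scal (\<beta> i) (bv (E i)))"
    and ei: "\<forall>i\<in>{2..n}. D (bv (E i)) = 0"
  shows "\<forall>a\<in>Bset n. \<forall>b\<in>Bset n. \<forall>c.
     Ls n a b (\<lambda>k. D (bv k) c) = Rv n b (D (bv a)) c - Rv n a (D (bv b)) c"
proof -
  have n1: "1 \<le> n" using n by simp
  have u: "D (bv H1) c = (case c of H1 \<Rightarrow> \<gamma>1 | H2 \<Rightarrow> 0 | E j \<Rightarrow> if 2 \<le> j \<and> j \<le> n then \<beta> (j+1) else 0)" for c
    unfolding h1 by (cases c) (auto simp: sum_bvE scal_bv)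
  have w: "D (bv H2) c = (case c of H1 \<Rightarrow> \<gamma>2 | H2 \<Rightarrow> 0 | E j \<Rightarrow> if j = 1 then \<beta> 2 else if 2 \<le> j \<and> j \<le> n then of_nat (j - 1) * \<beta> (j+1) else 0)" for c
    unfolding h2 by (cases c) (auto simp: sum_bvE scal_bv)
  have v: "D (bv (E 1)) c = (case c of H1 \<Rightarrow> 0 | H2 \<Rightarrow> 0 | E j \<Rightarrow> if j = 1 then \<beta> 1 else if 3 \<le> j \<and> j \<le> n then \<beta> j else 0)" for c
    unfolding e1 by (cases c) (auto simp: sum_bvE scal_bv)
  have z: "2 \<le> i \<Longrightarrow> i \<le> n \<Longrightarrow> D (bv (E i)) c = 0" for i c
    using ei by simp
  have zf: "2 \<le> i \<Longrightarrow> i \<le> n \<Longrightarrow> D (bv (E i)) = 0" for i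
    using ei by simp
  show ?thesis
  proof (intro ballI allI)
    fix a b c assume a: "a \<in> Bset n" and b: "b \<in> Bset n"
    have cA: "a = H1 \<or> a = H2 \<or> a = E 1 \<or> (\<exists>i. a = E i \<and> 2 \<le> i \<and> i \<le> n)"
      using a by (auto simp: Bset_def)
    have cB: "b = H1 \<or> b = H2 \<or> b = E 1 \<or> (\<exists>i. b = E i \<and> 2 \<le> i \<and> i \<le> n)"
      using b by (auto simp: Bset_def)
    show "Ls n a b (\<lambda>k. D (bv k) c) = Rv n b (D (bv a)) c - Rv n a (D (bv b)) c"
      using cA cB n1
      apply (auto simp: Ls_H1 Ls_H2H1 Ls_H2H2 Ls_H2E Ls_EE Ls_EH1 Ls_EH2 Rv_H1 Rv_H2 Rv_E1 Rv_Ej u w v z zf Rv_E1[unfolded One_nat_def] v[unfolded One_nat_def]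
          split: bidx.split)
      apply (auto simp: algebra_simps)
      done
  qed
qed


lemma fwd:
  assumes n: "4 \<le> n"
    and V: "\<And>k. k \<in> Bset n \<Longrightarrow> D (bv k) \<in> Vsp n"
    and B: "\<forall>a\<in>Bset n. \<forall>b\<in>Bset n. \<forall>c.
     Ls n a b (\<lambda>k. D (bv k) c) = Rv n b (D (bv a)) c - Rv n a (D (bv b)) c"
  shows "\<exists>(\<beta>::nat \<Rightarrow> complex) \<gamma>1 \<gamma>2.
       D (bv H1) = scal \<gamma>1 (bv H1) + (\<Sum>i=2..n. scal (\<beta> (i + 1)) (bv (E i))) \<and>
       D (bv H2) = scal \<gamma>2 (bv H1) + scal (\<beta> 2) (bv (E 1))
                   + (\<Sum>i=2..n. scal (of_nat (i - 1) * \<beta> (i + 1)) (bv (E i))) \<and>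
       D (bv (E 1)) = scal (\<beta> 1) (bv (E 1)) + (\<Sum>i=3..n. scal (\<beta> i) (bv (E i))) \<and>
       (\<forall>i\<in>{2..n}. D (bv (E i)) = 0)"
proof -
  have n1: "1 \<le> n" using n by simp
  have inB: "H1 \<in> Bset n" "H2 \<in> Bset n" "E 1 \<in> Bset n" using n1 by (auto simp: Bset_def)
  have inBE: "2 \<le> i \<Longrightarrow> i \<le> n \<Longrightarrow> E i \<in> Bset n" for i by (auto simp: Bset_def)
  define u where "u = D (bv H1)"
  define w where "w = D (bv H2)"
  define v where "v = D (bv (E 1))"
  have uV: "u (E j) = 0" if "j = 0 \<or> n < j" for j
  proof -
    have "E j \<notin> Bset n" using that by (auto simp: Bset_def)
    then show ?thesis using V[OF inB(1)] unfolding u_def Vsp_def by blast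
  qed
  have wV: "w (E j) = 0" if "j = 0 \<or> n < j" for j
  proof -
    have "E j \<notin> Bset n" using that by (auto simp: Bset_def)
    then show ?thesis using V[OF inB(2)] unfolding w_def Vsp_def by blast
  qed
  have vV: "v (E j) = 0" if "j = 0 \<or> n < j" for j
  proof -
    have "E j \<notin> Bset n" using that by (auto simp: Bset_def)
    then show ?thesis using V[OF inB(3)] unfolding v_def Vsp_def by blast
  qed
  have Z: "D (bv (E i)) = 0" if "2 \<le> i" "i \<le> n" for i
  proof
    fix c
    have 1: "Ls n (E i) H1 (\<lambda>k. D (bv k) c) = Rv n H1 (D (bv (E i))) c - Rv n (E i) (D (bv H1)) c"
      using B inB inBE[OF that] by blast
    have 2: "Ls n H1 (E i) (\<lambda>k. D (bv k) c) = Rv n (E i) (D (bv H1)) c - Rv n H1 (D (bv (E i))) c"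
      using B inB inBE[OF that] by blast
    from 1 2 that show "D (bv (E i)) c = 0 c"
      by (simp add: Ls_EH1 Ls_H1 Rv_Ej)
  qed
  have F2: "v c = Rv n H2 v c - Rv n (E 1) w c" for c
  proof -
    have "Ls n (E 1) H2 (\<lambda>k. D (bv k) c) = Rv n H2 (D (bv (E 1))) c - Rv n (E 1) (D (bv H2)) c"
      using B inB by blast
    then show ?thesis using Ls_EH2[OF n1, of 1] unfolding v_def w_def by simp
  qed
  have F3: "0 = Rv n H2 u c - Rv n H1 w c" for c
    using B inB Ls_H1 unfolding u_def w_def by metis
  have F4: "0 = Rv n (E 1) u c - Rv n H1 v c" for c
    using B inB Ls_H1 unfolding u_def v_def by metis
  have vH: "v H1 = 0" "v H2 = 0" using F2[of H1] F2[of H2] by (simp_all add: Rv_H2[OF n1] Rv_E1[OF n1] Rv_E1[OF n1, unfolded One_nat_def])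
  have wH2: "w H2 = 0" using F2[of "E 1"] by (simp add: Rv_H2[OF n1] Rv_E1[OF n1] Rv_E1[OF n1, unfolded One_nat_def])
  have vE2: "v (E 2) = 0" using F4[of "E 2"] n by (simp add: Rv_H1 Rv_E1[OF n1] Rv_E1[OF n1, unfolded One_nat_def])
  have vEj: "v (E j) = u (E (j - 1))" if "3 \<le> j" "j \<le> n" for j
    using F4[of "E j"] that by (simp add: Rv_H1 Rv_E1[OF n1] Rv_E1[OF n1, unfolded One_nat_def])
  have uH2: "u H2 = 0" using F4[of "E 1"] by (simp add: Rv_H1 Rv_E1[OF n1] Rv_E1[OF n1, unfolded One_nat_def])
  have uE1: "u (E 1) = 0" using F3[of "E 1"] by (simp add: Rv_H1 Rv_H2[OF n1])
  have wEj: "w (E j) = of_nat (j - 1) * u (E j)" if "2 \<le> j" "j \<le> n" for j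
    using F3[of "E j"] that by (simp add: Rv_H1 Rv_H2[OF n1])
  have uSmall: "u (E j) = 0" if "j < 2" for j
    using that uE1 uV by (cases "j = 0") (auto simp: less_2_cases_iff)
  have vSmall: "v (E j) = 0" if "j < 3" "j \<noteq> 1" for j
  proof -
    have "j = 0 \<or> j = 2" using that by auto
    then show ?thesis using vE2 vV by auto
  qed
  define \<beta> where "\<beta> j = (if j = 1 then v (E 1) else if j = 2 then w (E 1) else u (E (j - 1)))" for j
  show ?thesis
  proof (intro exI conjI)
    show "D (bv H1) = scal (u H1) (bv H1) + (\<Sum>i=2..n. scal (\<beta> (i + 1)) (bv (E i)))"
      unfolding u_def[symmetric]
    proof
      fix c show "u c = (scal (u H1) (bv H1) + (\<Sum>i=2..n. scal (\<beta> (i + 1)) (bv (E i)))) c"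
        apply (cases c)
        using uH2 uE1 uV uSmall
          apply (auto simp: sum_bvE scal_bv \<beta>_def)
        done
    qed
    show "D (bv H2) = scal (w H1) (bv H1) + scal (\<beta> 2) (bv (E 1))
                   + (\<Sum>i=2..n. scal (of_nat (i - 1) * \<beta> (i + 1)) (bv (E i)))"
      unfolding w_def[symmetric]
    proof
      fix c show "w c = (scal (w H1) (bv H1) + scal (\<beta> 2) (bv (E 1))
                   + (\<Sum>i=2..n. scal (of_nat (i - 1) * \<beta> (i + 1)) (bv (E i)))) c"
        apply (cases c)
        using wH2 wEj wV
          apply (auto simp: sum_bvE scal_bv \<beta>_def)
        done
    qed
    show "D (bv (E 1)) = scal (\<beta> 1) (bv (E 1)) + (\<Sum>i=3..n. scal (\<beta> i) (bv (E i)))"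
      unfolding v_def[symmetric]
    proof
      fix c show "v c = (scal (\<beta> 1) (bv (E 1)) + (\<Sum>i=3..n. scal (\<beta> i) (bv (E i)))) c"
        apply (cases c)
        using vH vE2 vEj vV vSmall
          apply (auto simp: sum_bvE scal_bv \<beta>_def)
        done
    qed
    show "\<forall>i\<in>{2..n}. D (bv (E i)) = 0" using Z by auto
  qed
qed

theorem mainTheorem10:
  fixes n :: nat and D :: "(bidx \<Rightarrow> complex) \<Rightarrow> (bidx \<Rightarrow> complex)"
  assumes "n \<ge> 4" and "linear_on n D"
  shows "anti_derivation n D \<longleftrightarrow>
    (\<exists>(\<beta>::nat \<Rightarrow> complex) \<gamma>1 \<gamma>2.
       D (bv H1) = scal \<gamma>1 (bv H1) + (\<Sum>i=2..n. scal (\<beta> (i + 1)) (bv (E i))) \<and>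
       D (bv H2) = scal \<gamma>2 (bv H1) + scal (\<beta> 2) (bv (E 1))
                   + (\<Sum>i=2..n. scal (of_nat (i - 1) * \<beta> (i + 1)) (bv (E i))) \<and>
       D (bv (E 1)) = scal (\<beta> 1) (bv (E 1)) + (\<Sum>i=3..n. scal (\<beta> i) (bv (E i))) \<and>
       (\<forall>i\<in>{2..n}. D (bv (E i)) = 0))"
proof -
  have n1: "1 \<le> n" using assms(1) by simp
  have V: "\<And>k. k \<in> Bset n \<Longrightarrow> D (bv k) \<in> Vsp n"
    using assms(2) bv_Vsp unfolding linear_on_def by blast
  show ?thesis
    unfolding anti_iff[OF assms(2) n1]
  proof
    assume "\<forall>a\<in>Bset n. \<forall>b\<in>Bset n. \<forall>c.
     Ls n a b (\<lambda>k. D (bv k) c) = Rv n b (D (bv a)) c - Rv n a (D (bv b)) c"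
    then show "\<exists>(\<beta>::nat \<Rightarrow> complex) \<gamma>1 \<gamma>2.
       D (bv H1) = scal \<gamma>1 (bv H1) + (\<Sum>i=2..n. scal (\<beta> (i + 1)) (bv (E i))) \<and>
       D (bv H2) = scal \<gamma>2 (bv H1) + scal (\<beta> 2) (bv (E 1))
                   + (\<Sum>i=2..n. scal (of_nat (i - 1) * \<beta> (i + 1)) (bv (E i))) \<and>
       D (bv (E 1)) = scal (\<beta> 1) (bv (E 1)) + (\<Sum>i=3..n. scal (\<beta> i) (bv (E i))) \<and>
       (\<forall>i\<in>{2..n}. D (bv (E i)) = 0)"
      using fwd[where D=D, OF assms(1) V] by blast
  next
    assume "\<exists>(\<beta>::nat \<Rightarrow> complex) \<gamma>1 \<gamma>2.
       D (bv H1) = scal \<gamma>1 (bv H1) + (\<Sum>i=2..n. scal (\<beta> (i + 1)) (bv (E i))) \<and>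
       D (bv H2) = scal \<gamma>2 (bv H1) + scal (\<beta> 2) (bv (E 1))
                   + (\<Sum>i=2..n. scal (of_nat (i - 1) * \<beta> (i + 1)) (bv (E i))) \<and>
       D (bv (E 1)) = scal (\<beta> 1) (bv (E 1)) + (\<Sum>i=3..n. scal (\<beta> i) (bv (E i))) \<and>
       (\<forall>i\<in>{2..n}. D (bv (E i)) = 0)"
    then show "\<forall>a\<in>Bset n. \<forall>b\<in>Bset n. \<forall>c.
     Ls n a b (\<lambda>k. D (bv k) c) = Rv n b (D (bv a)) c - Rv n a (D (bv b)) c"
      using bwd[OF assms(1)] by blast
  qed
qed

end
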